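(* (a) If $Y,Z$ are CFG-spaces contained (as metric subspaces) in a metric space $X$ over a Boolean ring $B$, then $Y\cap Z$ is a CFG-space. (b) If $f:X\to Y$ is a contractive map between CFG-spaces over $B$ and $Z\subseteq Y$ is a CFG-space, then $f^{-1}(Z)$ is a CFG-space.
   Context: $B$ is a Boolean ring ($a\vee b=a+b+ab$, $a\le b\iff ab=a$; $a_1\oplus\cdots\oplus a_n$ denotes a sum of pairwise disjoint elements). A Boolean metric space over $B$: set $X$ with $d:X\times X\to B$, $d(x,y)=0\iff x=y$, symmetric, $d(x,z)\le d(x,y)\vee d(y,z)$; subsets carry the restricted metric. For $x_1,\dots,x_n\in X$, $a_i\in B$ with $a_1\oplus\cdots\oplus a_n=1$, $x$ is a convex combination of the $x_i$ with coefficients $a_i$ if $a_id(x,x_i)=0$ for all $i$. A CFG-space is a space in which all such combinations exist and every element is a convex combination of elements of some fixed finite subset (the empty space counts). A map $f$ is contractive if $d(f(x),f(y))\le d(x,y)$. *)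

theory Defs
  imports Main
begin

text \<open>A Boolean ring: every element is idempotent (such rings are automatically
commutative, so we work over a commutative unital ring type).\<close>
definition boolean_ring :: "'b::comm_ring_1 itself \<Rightarrow> bool" where
  "boolean_ring _ \<longleftrightarrow> (\<forall>a::'b. a * a = a)"

definition bjoin :: "'b::comm_ring_1 \<Rightarrow> 'b \<Rightarrow> 'b" where
  "bjoin a b = a + b + a * b"

definition ble :: "'b::comm_ring_1 \<Rightarrow> 'b \<Rightarrow> bool" where
  "ble a b \<longleftrightarrow> a * b = a"

definition bmetric :: "'a set \<Rightarrow> ('a \<Rightarrow> 'a \<Rightarrow> 'b::comm_ring_1) \<Rightarrow> bool" where
  "bmetric X d \<longleftrightarrow>
     (\<forall>x\<in>X. \<forall>y\<in>X. d x y = 0 \<longleftrightarrow> x = y) \<and>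
     (\<forall>x\<in>X. \<forall>y\<in>X. d x y = d y x) \<and>
     (\<forall>x\<in>X. \<forall>y\<in>X. \<forall>z\<in>X. ble (d x z) (bjoin (d x y) (d y z)))"

text \<open>a_1 \<oplus> ... \<oplus> a_n = 1: pairwise disjoint elements (n \<ge> 1) summing to 1.\<close>
definition disj_partition :: "nat \<Rightarrow> (nat \<Rightarrow> 'b::comm_ring_1) \<Rightarrow> bool" where
  "disj_partition n a \<longleftrightarrow> 0 < n \<and>
     (\<forall>i<n. \<forall>j<n. i \<noteq> j \<longrightarrow> a i * a j = 0) \<and> (\<Sum>i<n. a i) = 1"

definition convex_comb ::
  "('a \<Rightarrow> 'a \<Rightarrow> 'b::comm_ring_1) \<Rightarrow> 'a \<Rightarrow> nat \<Rightarrow> (nat \<Rightarrow> 'a) \<Rightarrow> (nat \<Rightarrow> 'b) \<Rightarrow> bool" where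
  "convex_comb d x n xs a \<longleftrightarrow> (\<forall>i<n. a i * d x (xs i) = 0)"

definition cfg_space :: "'a set \<Rightarrow> ('a \<Rightarrow> 'a \<Rightarrow> 'b::comm_ring_1) \<Rightarrow> bool" where
  "cfg_space S d \<longleftrightarrow> bmetric S d \<and>
     (\<forall>n xs a. disj_partition n a \<and> (\<forall>i<n. xs i \<in> S) \<longrightarrow>
        (\<exists>x\<in>S. convex_comb d x n xs a)) \<and>
     (\<exists>F. finite F \<and> F \<subseteq> S \<and>
        (\<forall>x\<in>S. \<exists>n xs a. disj_partition n a \<and> (\<forall>i<n. xs i \<in> F) \<and> convex_comb d x n xs a))"

definition contractive ::
  "'a set \<Rightarrow> ('a \<Rightarrow> 'a \<Rightarrow> 'b::comm_ring_1) \<Rightarrow> ('c \<Rightarrow> 'c \<Rightarrow> 'b) \<Rightarrow> ('a \<Rightarrow> 'c) \<Rightarrow> bool" where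
  "contractive X dX dY f \<longleftrightarrow> (\<forall>x\<in>X. \<forall>y\<in>X. ble (dY (f x) (f y)) (dX x y))"

end

theory Submission
  imports Defs
begin

lemma cfg_bm: "cfg_space S d \<Longrightarrow> bmetric S d"
  unfolding cfg_space_def by simp

lemma cfg_ex: "cfg_space S d \<Longrightarrow> disj_partition n a \<Longrightarrow> \<forall>i<n. xs i \<in> S \<Longrightarrow>
    \<exists>x\<in>S. convex_comb d x n xs a"
  unfolding cfg_space_def by blast

lemma cfg_gen: "cfg_space S d \<Longrightarrow> \<exists>F. finite F \<and> F \<subseteq> S \<and>
        (\<forall>x\<in>S. \<exists>n xs a. disj_partition n a \<and> (\<forall>i<n. xs i \<in> F) \<and> convex_comb d x n xs a)"
  unfolding cfg_space_def by blast

lemma bm_zero: "bmetric S d \<Longrightarrow> x \<in> S \<Longrightarrow> y \<in> S \<Longrightarrow> d x y = 0 \<Longrightarrow> x = y"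
  unfolding bmetric_def by blast

lemma zero_join:
  fixes c p q r :: "'b::comm_ring_1"
  assumes "c*p = 0" "c*q = 0" "ble r (bjoin p q)"
  shows "c*r = 0"
proof -
  have "c*r = c*(r*(p+q+p*q))" using assms(3) by (simp add: ble_def bjoin_def)
  also have "\<dots> = r*(c*p) + r*(c*q) + r*(c*p)*q" by (simp add: algebra_simps)
  also have "\<dots> = 0" using assms by simp
  finally show ?thesis .
qed

lemma tri_zero:
  assumes "bmetric S d" "x \<in> S" "y \<in> S" "z \<in> S" "c * d x y = 0" "c * d y z = 0"
  shows "c * d x z = 0"
proof -
  have "ble (d x z) (bjoin (d x y) (d y z))" using assms(1-4) unfolding bmetric_def by blast
  then show ?thesis using assms(5,6) zero_join[of c "d x y" "d y z" "d x z"] by blast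
qed

lemma sym_d:
  assumes "bmetric S d" "x \<in> S" "y \<in> S"
  shows "d x y = d y x"
  using assms unfolding bmetric_def by blast

lemma bmetric_subset: "bmetric X d \<Longrightarrow> S \<subseteq> X \<Longrightarrow> bmetric S d"
  unfolding bmetric_def by blast

lemma split_zero:
  fixes e x :: "'b::comm_ring_1"
  assumes "e * x = 0" "(1 - e) * x = 0"
  shows "x = 0"
proof -
  have "x = e*x + (1-e)*x" by (simp add: algebra_simps)
  then show ?thesis using assms by simp
qed

lemma bool_compl:
  fixes e :: "'b::comm_ring_1"
  assumes "boolean_ring TYPE('b)"
  shows "e * (1 - e) = 0" "(1 - e) * e = 0"
proof -
  have "e*e = e" using assms unfolding boolean_ring_def by blast
  then show "e * (1 - e) = 0" "(1 - e) * e = 0" by (simp_all add: algebra_simps)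
qed

lemma unique_comb:
  assumes "bmetric S d" "x \<in> S" "x' \<in> S" "\<forall>i<n. xs i \<in> S" "disj_partition n a"
    "convex_comb d x n xs a" "convex_comb d x' n xs a"
  shows "x = x'"
proof -
  have "\<forall>i<n. a i * d x x' = 0"
  proof (intro allI impI)
    fix i assume i: "i < n"
    have 1: "a i * d x (xs i) = 0" using assms(6) i unfolding convex_comb_def by blast
    have "a i * d x' (xs i) = 0" using assms(7) i unfolding convex_comb_def by blast
    then have 2: "a i * d (xs i) x' = 0" using sym_d[OF assms(1)] assms(3,4) i by metis
    show "a i * d x x' = 0" using tri_zero[OF assms(1) assms(2) _ assms(3) 1 2] assms(4) i by blast
  qed
  then have "(\<Sum>i<n. a i * d x x') = 0" by simp
  then have "(\<Sum>i<n. a i) * d x x' = 0" by (simp add: sum_distrib_right)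
  then have "d x x' = 0" using assms(5) unfolding disj_partition_def by simp
  then show ?thesis using bm_zero[OF assms(1-3)] by blast
qed

lemma two_comb:
  fixes d :: "'a \<Rightarrow> 'a \<Rightarrow> 'b::comm_ring_1"
  assumes B: "boolean_ring TYPE('b)" and S: "cfg_space S d" and y: "y \<in> S" and w: "w \<in> S"
  shows "\<exists>p\<in>S. e * d p y = 0 \<and> (1 - e) * d p w = 0"
proof -
  define xs where "xs = (\<lambda>i::nat. if i = 0 then y else w)"
  define a where "a = (\<lambda>i::nat. if i = 0 then e else 1 - e)"
  have i2: "\<And>i. i < (2::nat) \<Longrightarrow> i = 0 \<or> i = 1" by arith
  have "disj_partition 2 a"
    unfolding disj_partition_def
  proof (intro conjI allI impI)
    fix i j :: nat assume "i < 2" "j < 2" "i \<noteq> j"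
    then have "(i = 0 \<and> j = 1) \<or> (i = 1 \<and> j = 0)" using i2 by blast
    then show "a i * a j = 0" using bool_compl[OF B, of e] unfolding a_def by auto
  next
    show "(\<Sum>i<2. a i) = 1" by (simp add: a_def numeral_2_eq_2 lessThan_Suc)
  qed simp
  moreover have "\<forall>i<2. xs i \<in> S" using i2 y w unfolding xs_def by auto
  ultimately obtain p where p: "p \<in> S" "convex_comb d p 2 xs a"
    using cfg_ex[OF S] by blast
  then have "a 0 * d p (xs 0) = 0" "a 1 * d p (xs 1) = 0" unfolding convex_comb_def by auto
  then show ?thesis using p(1) unfolding a_def xs_def by auto
qed

lemma comb_from_set:
  fixes I :: "'i set"
  assumes "finite I" "I \<noteq> {}" "\<forall>i\<in>I. \<forall>j\<in>I. i \<noteq> j \<longrightarrow> c i * c j = 0"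
    "sum c I = 1" "\<forall>i\<in>I. g i \<in> F \<and> c i * d x (g i) = 0"
  shows "\<exists>n xs a. disj_partition n a \<and> (\<forall>i<n. xs i \<in> F) \<and> convex_comb d x n xs a"
proof -
  obtain h where h: "bij_betw h {0..<card I} I" using ex_bij_betw_nat_finite[OF assms(1)] by blast
  have hI: "\<And>i. i < card I \<Longrightarrow> h i \<in> I" using h unfolding bij_betw_def by auto
  have inj: "inj_on h {0..<card I}" using h unfolding bij_betw_def by auto
  have "disj_partition (card I) (c \<circ> h)"
    unfolding disj_partition_def
  proof (intro conjI allI impI)
    show "0 < card I" using assms(1,2) by (simp add: card_gt_0_iff)
  next
    fix i j assume "i < card I" "j < card I" "i \<noteq> j"
    then have "h i \<noteq> h j" "h i \<in> I" "h j \<in> I" using inj hI unfolding inj_on_def by auto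
    then show "(c \<circ> h) i * (c \<circ> h) j = 0" using assms(3) by auto
  next
    have "(\<Sum>i<card I. (c \<circ> h) i) = sum c I"
      using sum.reindex_bij_betw[OF h, of c] by (simp add: lessThan_atLeast0)
    then show "(\<Sum>i<card I. (c \<circ> h) i) = 1" using assms(4) by simp
  qed
  moreover have "\<forall>i<card I. (g \<circ> h) i \<in> F" using hI assms(5) by auto
  moreover have "convex_comb d x (card I) (g \<circ> h) (c \<circ> h)"
    using hI assms(5) unfolding convex_comb_def by auto
  ultimately show ?thesis by blast
qed

lemma prod_partition:
  assumes "disj_partition n1 a" "disj_partition n2 b"
  shows "finite ({..<n1} \<times> {..<n2})" "{..<n1} \<times> {..<n2} \<noteq> {}"
    "\<forall>i\<in>{..<n1} \<times> {..<n2}. \<forall>j\<in>{..<n1} \<times> {..<n2}. i \<noteq> j \<longrightarrow>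
        (\<lambda>(i,j). a i * b j) i * (\<lambda>(i,j). a i * b j) j = 0"
    "sum (\<lambda>(i,j). a i * b j) ({..<n1} \<times> {..<n2}) = 1"
proof -
  show "finite ({..<n1} \<times> {..<n2})" by simp
  show "{..<n1} \<times> {..<n2} \<noteq> {}" using assms unfolding disj_partition_def by auto
  show "\<forall>i\<in>{..<n1} \<times> {..<n2}. \<forall>j\<in>{..<n1} \<times> {..<n2}. i \<noteq> j \<longrightarrow>
        (\<lambda>(i,j). a i * b j) i * (\<lambda>(i,j). a i * b j) j = 0"
  proof (intro ballI impI)
    fix p q assume p: "p \<in> {..<n1} \<times> {..<n2}" and q: "q \<in> {..<n1} \<times> {..<n2}" and "p \<noteq> q"
    obtain i j i' j' where pq: "p = (i,j)" "q = (i',j')" by fastforce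
    have e: "(a i * b j) * (a i' * b j') = (a i * a i') * (b j * b j')" by (simp add: algebra_simps)
    show "(\<lambda>(i,j). a i * b j) p * (\<lambda>(i,j). a i * b j) q = 0"
    proof (cases "i = i'")
      case True
      then have "j \<noteq> j'" using \<open>p \<noteq> q\<close> pq by simp
      then have "b j * b j' = 0" using assms(2) p q pq unfolding disj_partition_def by auto
      then show ?thesis using pq e by simp
    next
      case False
      then have "a i * a i' = 0" using assms(1) p q pq unfolding disj_partition_def by auto
      then show ?thesis using pq e by simp
    qed
  qed
  have "sum (\<lambda>(i,j). a i * b j) ({..<n1} \<times> {..<n2}) = (\<Sum>i<n1. \<Sum>j<n2. a i * b j)"
    by (simp add: sum.cartesian_product)
  also have "\<dots> = (\<Sum>i<n1. a i) * (\<Sum>j<n2. b j)" by (simp add: sum_product)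
  also have "\<dots> = 1" using assms unfolding disj_partition_def by simp
  finally show "sum (\<lambda>(i,j). a i * b j) ({..<n1} \<times> {..<n2}) = 1" .
qed

lemma contr_zero:
  assumes "contractive X dX dY f" "x \<in> X" "y \<in> X" "c * dX x y = 0"
  shows "c * dY (f x) (f y) = 0"
proof -
  have "dY (f x) (f y) * dX x y = dY (f x) (f y)"
    using assms(1-3) unfolding contractive_def ble_def by blast
  then have "c * dY (f x) (f y) = dY (f x) (f y) * (c * dX x y)"
    by (metis mult.assoc mult.commute)
  then show ?thesis using assms(4) by simp
qed


lemma partA:
  fixes X Y Z :: "'a set" and d :: "'a \<Rightarrow> 'a \<Rightarrow> 'b::comm_ring_1"
  assumes B: "boolean_ring TYPE('b)" and X: "bmetric X d" and YX: "Y \<subseteq> X" and ZX: "Z \<subseteq> X"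
    and Y: "cfg_space Y d" and Z: "cfg_space Z d"
  shows "cfg_space (Y \<inter> Z) d"
  unfolding cfg_space_def
proof (intro conjI)
  show "bmetric (Y \<inter> Z) d" using bmetric_subset[OF X] YX by blast
  show "\<forall>n xs a. disj_partition n a \<and> (\<forall>i<n. xs i \<in> Y \<inter> Z) \<longrightarrow>
        (\<exists>x\<in>Y \<inter> Z. convex_comb d x n xs a)"
  proof (intro allI impI)
    fix n :: nat and xs :: "nat \<Rightarrow> 'a" and a :: "nat \<Rightarrow> 'b" assume h: "disj_partition n a \<and> (\<forall>i<n. xs i \<in> Y \<inter> Z)"
    obtain x where x: "x \<in> Y" "convex_comb d x n xs a" using cfg_ex[OF Y] h by blast
    obtain x' where x': "x' \<in> Z" "convex_comb d x' n xs a" using cfg_ex[OF Z] h by blast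
    have "x = x'" using unique_comb[OF X, of x x' n xs a] x x' h YX ZX by blast
    then show "\<exists>x\<in>Y \<inter> Z. convex_comb d x n xs a" using x x' by blast
  qed
  show "\<exists>F. finite F \<and> F \<subseteq> Y \<inter> Z \<and>
     (\<forall>x\<in>Y \<inter> Z. \<exists>n xs a. disj_partition n a \<and> (\<forall>i<n. xs i \<in> F) \<and> convex_comb d x n xs a)"
  proof (cases "Y \<inter> Z = {}")
    case True show ?thesis unfolding True by (intro exI[of _ "{}"]) simp
  next
    case False
    then obtain w0 where w0: "w0 \<in> Y" "w0 \<in> Z" by blast
    obtain FY where FY: "finite FY" "FY \<subseteq> Y"
      "\<forall>x\<in>Y. \<exists>n xs a. disj_partition n a \<and> (\<forall>i<n. xs i \<in> FY) \<and> convex_comb d x n xs a"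
      using cfg_gen[OF Y] by blast
    obtain FZ where FZ: "finite FZ" "FZ \<subseteq> Z"
      "\<forall>x\<in>Z. \<exists>n xs a. disj_partition n a \<and> (\<forall>i<n. xs i \<in> FZ) \<and> convex_comb d x n xs a"
      using cfg_gen[OF Z] by blast
    have ex: "\<exists>p. p \<in> Y \<inter> Z \<and> (1 - d y z) * d p y = 0" if y: "y \<in> Y" and z: "z \<in> Z" for y z
    proof -
      define e where "e = 1 - d y z"
      obtain p where p: "p \<in> Y" "e * d p y = 0" "(1 - e) * d p w0 = 0"
        using two_comb[OF B Y y w0(1)] by blast
      obtain q where q: "q \<in> Z" "e * d q z = 0" "(1 - e) * d q w0 = 0"
        using two_comb[OF B Z z w0(2)] by blast
      have inX: "p \<in> X" "q \<in> X" "y \<in> X" "z \<in> X" "w0 \<in> X" using p q y z w0 YX ZX by auto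
      have "e * d y z = 0" using bool_compl(2)[OF B, of "d y z"] unfolding e_def by (simp add: mult.commute)
      moreover have "e * d z q = 0" using q(2) sym_d[OF X inX(2) inX(4)] by simp
      ultimately have "e * d y q = 0" using tri_zero[OF X inX(3) inX(4) inX(2)] by blast
      then have 1: "e * d p q = 0" using tri_zero[OF X inX(1) inX(3) inX(2) p(2)] by blast
      have "(1 - e) * d w0 q = 0" using q(3) sym_d[OF X inX(2) inX(5)] by simp
      then have 2: "(1 - e) * d p q = 0" using tri_zero[OF X inX(1) inX(5) inX(2) p(3)] by blast
      have "d p q = 0" using split_zero[OF 1 2] .
      then have "p = q" using bm_zero[OF X inX(1) inX(2)] by blast
      then have "p \<in> Y \<inter> Z" using p(1) q(1) by simp
      moreover have "(1 - d y z) * d p y = 0" using p(2) unfolding e_def .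
      ultimately show ?thesis by blast
    qed
    define P where "P y z = (SOME p. p \<in> Y \<inter> Z \<and> (1 - d y z) * d p y = 0)" for y z
    have P: "P y z \<in> Y \<inter> Z \<and> (1 - d y z) * d (P y z) y = 0" if "y \<in> Y" "z \<in> Z" for y z
      unfolding P_def using someI_ex[OF ex[OF that]] .
    define F where "F = (\<lambda>(y,z). P y z) ` (FY \<times> FZ)"
    have "finite F" unfolding F_def using FY(1) FZ(1) by simp
    moreover have "F \<subseteq> Y \<inter> Z" unfolding F_def
    proof
      fix p assume "p \<in> (\<lambda>(y, z). P y z) ` (FY \<times> FZ)"
      then obtain y z where "y \<in> FY" "z \<in> FZ" "p = P y z" by auto
      then show "p \<in> Y \<inter> Z" using P[of y z] FY(2) FZ(2) by blast
    qed
    moreover have "\<forall>x\<in>Y \<inter> Z. \<exists>n xs a. disj_partition n a \<and> (\<forall>i<n. xs i \<in> F) \<and> convex_comb d x n xs a"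
    proof
      fix w assume w: "w \<in> Y \<inter> Z"
      obtain n1 xs1 and a :: "nat \<Rightarrow> 'b" where A: "disj_partition n1 a" "\<forall>i<n1. xs1 i \<in> FY" "convex_comb d w n1 xs1 a"
        using FY(3) w by blast
      obtain n2 xs2 and b :: "nat \<Rightarrow> 'b" where Bb: "disj_partition n2 b" "\<forall>i<n2. xs2 i \<in> FZ" "convex_comb d w n2 xs2 b"
        using FZ(3) w by blast
      note PP = prod_partition[OF A(1) Bb(1)]
      have "\<forall>ij\<in>{..<n1} \<times> {..<n2}. (\<lambda>(i,j). P (xs1 i) (xs2 j)) ij \<in> F \<and> (\<lambda>(i,j). a i * b j) ij * d w ((\<lambda>(i,j). P (xs1 i) (xs2 j)) ij) = 0"
      proof
        fix ij assume ij: "ij \<in> {..<n1} \<times> {..<n2}"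
        obtain i j where ijd: "ij = (i,j)" "i < n1" "j < n2" using ij by auto
        define y where "y = xs1 i"
        define z where "z = xs2 j"
        define c where "c = a i * b j"
        have yz: "y \<in> FY" "z \<in> FZ" using A(2) Bb(2) ijd unfolding y_def z_def by auto
        have yzYZ: "y \<in> Y" "z \<in> Z" using yz FY(2) FZ(2) by auto
        have inX: "y \<in> X" "z \<in> X" "w \<in> X" "P y z \<in> X" using yzYZ YX ZX w P[OF yzYZ] by auto
        have "a i * d w y = 0" using A(3) ijd unfolding convex_comb_def y_def by blast
        moreover have "c * d w y = b j * (a i * d w y)" unfolding c_def by (simp add: ac_simps)
        ultimately have wy: "c * d w y = 0" by simp
        have "b j * d w z = 0" using Bb(3) ijd unfolding convex_comb_def z_def by blast
        moreover have "c * d w z = a i * (b j * d w z)" unfolding c_def by (simp add: ac_simps)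
        ultimately have wz: "c * d w z = 0" by simp
        have "c * d y w = 0" using wy sym_d[OF X inX(1) inX(3)] by simp
        then have "c * d y z = 0" using tri_zero[OF X inX(1) inX(3) inX(2) _ wz] by blast
        then have ce: "c * (1 - d y z) = c" by (simp add: algebra_simps)
        have "(1 - d y z) * d (P y z) y = 0" using P[OF yzYZ] by blast
        moreover have "c * d (P y z) y = c * ((1 - d y z) * d (P y z) y)" using ce by (metis mult.assoc)
        ultimately have "c * d (P y z) y = 0" by simp
        then have "c * d y (P y z) = 0" using sym_d[OF X inX(4) inX(1)] by simp
        then have "c * d w (P y z) = 0" using tri_zero[OF X inX(3) inX(1) inX(4) wy] by blast
        moreover have "P y z \<in> F" unfolding F_def by (rule image_eqI[where x="(y,z)"]) (auto simp: yz)
        ultimately show "(\<lambda>(i,j). P (xs1 i) (xs2 j)) ij \<in> F \<and> (\<lambda>(i,j). a i * b j) ij * d w ((\<lambda>(i,j). P (xs1 i) (xs2 j)) ij) = 0"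
          using ijd unfolding y_def z_def c_def by simp
      qed
      from comb_from_set[where g="\<lambda>(i,j). P (xs1 i) (xs2 j)" and F=F and d=d and x=w, OF PP(1) PP(2) PP(3) PP(4) this]
      show "\<exists>n xs a. disj_partition n a \<and> (\<forall>i<n. xs i \<in> F) \<and> convex_comb d w n xs a" .
    qed
    ultimately show ?thesis by blast
  qed
qed

lemma partB:
  fixes X1 :: "'c set" and d1 :: "'c \<Rightarrow> 'c \<Rightarrow> 'b::comm_ring_1"
    and Y1 Z1 :: "'e set" and d2 :: "'e \<Rightarrow> 'e \<Rightarrow> 'b" and f :: "'c \<Rightarrow> 'e"
  assumes B: "boolean_ring TYPE('b)" and X1: "cfg_space X1 d1" and Y1: "cfg_space Y1 d2"
    and fX: "f ` X1 \<subseteq> Y1" and C: "contractive X1 d1 d2 f" and ZY: "Z1 \<subseteq> Y1"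
    and Z1: "cfg_space Z1 d2"
  shows "cfg_space {x \<in> X1. f x \<in> Z1} d1"
  unfolding cfg_space_def
proof (intro conjI)
  have bX: "bmetric X1 d1" by (rule cfg_bm[OF X1])
  have bY: "bmetric Y1 d2" by (rule cfg_bm[OF Y1])
  show "bmetric {x \<in> X1. f x \<in> Z1} d1" by (rule bmetric_subset[OF bX]) (rule subsetI, simp)
  show "\<forall>n xs a. disj_partition n a \<and> (\<forall>i<n. xs i \<in> {x \<in> X1. f x \<in> Z1}) \<longrightarrow>
        (\<exists>x\<in>{x \<in> X1. f x \<in> Z1}. convex_comb d1 x n xs a)"
  proof (intro allI impI)
    fix n :: nat and xs :: "nat \<Rightarrow> 'c" and a :: "nat \<Rightarrow> 'b"
    assume h: "disj_partition n a \<and> (\<forall>i<n. xs i \<in> {x \<in> X1. f x \<in> Z1})"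
    have h1: "disj_partition n a" using h by blast
    have hX: "\<And>i. i < n \<Longrightarrow> xs i \<in> X1" and hZ: "\<And>i. i < n \<Longrightarrow> f (xs i) \<in> Z1" using h by auto
    obtain x where x: "x \<in> X1" "convex_comb d1 x n xs a" using cfg_ex[OF X1 h1] hX by blast
    have fZ: "\<forall>i<n. (f \<circ> xs) i \<in> Z1" using hZ by simp
    obtain z where z: "z \<in> Z1" "convex_comb d2 z n (f \<circ> xs) a"
      using cfg_ex[OF Z1 h1 fZ] by blast
    have "convex_comb d2 (f x) n (f \<circ> xs) a"
      unfolding convex_comb_def
    proof (intro allI impI)
      fix i assume i: "i < n"
      have "a i * d1 x (xs i) = 0" using x(2) i unfolding convex_comb_def by blast
      from contr_zero[OF C x(1) hX[OF i] this]
      show "a i * d2 (f x) ((f \<circ> xs) i) = 0" by simp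
    qed
    moreover have fY: "\<forall>i<n. (f \<circ> xs) i \<in> Y1" using hX fX by auto
    moreover have "f x \<in> Y1" using x(1) fX by blast
    moreover have "z \<in> Y1" using z(1) ZY by blast
    ultimately have "f x = z" using unique_comb[OF bY _ _ fY h1 _ z(2)] by blast
    then show "\<exists>x\<in>{x \<in> X1. f x \<in> Z1}. convex_comb d1 x n xs a" using x z by blast
  qed
  show "\<exists>F. finite F \<and> F \<subseteq> {x \<in> X1. f x \<in> Z1} \<and>
     (\<forall>x\<in>{x \<in> X1. f x \<in> Z1}. \<exists>n xs a. disj_partition n a \<and> (\<forall>i<n. xs i \<in> F) \<and> convex_comb d1 x n xs a)"
  proof (cases "{x \<in> X1. f x \<in> Z1} = {}")
    case True show ?thesis unfolding True by (intro exI[of _ "{}"]) simp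
  next
    case False
    then obtain w0 where w0: "w0 \<in> X1" "f w0 \<in> Z1" by blast
    obtain FX where FX: "finite FX" "FX \<subseteq> X1"
      "\<forall>x\<in>X1. \<exists>n xs a. disj_partition n a \<and> (\<forall>i<n. xs i \<in> FX) \<and> convex_comb d1 x n xs a"
      using cfg_gen[OF X1] by blast
    obtain FZ where FZ: "finite FZ" "FZ \<subseteq> Z1"
      "\<forall>x\<in>Z1. \<exists>n xs a. disj_partition n a \<and> (\<forall>i<n. xs i \<in> FZ) \<and> convex_comb d2 x n xs a"
      using cfg_gen[OF Z1] by blast
    have ex: "\<exists>p. p \<in> {x \<in> X1. f x \<in> Z1} \<and> (1 - d2 (f y) z) * d1 p y = 0"
      if y: "y \<in> X1" and z: "z \<in> Z1" for y z
    proof -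
      define e where "e = 1 - d2 (f y) z"
      obtain p where p: "p \<in> X1" "e * d1 p y = 0" "(1 - e) * d1 p w0 = 0"
        using two_comb[OF B X1 y w0(1)] by blast
      obtain q where q: "q \<in> Z1" "e * d2 q z = 0" "(1 - e) * d2 q (f w0) = 0"
        using two_comb[OF B Z1 z w0(2)] by blast
      have inY: "f p \<in> Y1" "q \<in> Y1" "f y \<in> Y1" "z \<in> Y1" "f w0 \<in> Y1"
        using p q y z w0 fX ZY by auto
      have "e * d2 (f y) z = 0" using bool_compl(2)[OF B, of "d2 (f y) z"] unfolding e_def
        by (simp add: mult.commute)
      moreover have "e * d2 z q = 0" using q(2) sym_d[OF bY inY(2) inY(4)] by simp
      ultimately have "e * d2 (f y) q = 0" using tri_zero[OF bY inY(3) inY(4) inY(2)] by blast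
      moreover have "e * d2 (f p) (f y) = 0" using contr_zero[OF C p(1) y p(2)] .
      ultimately have 1: "e * d2 (f p) q = 0" using tri_zero[OF bY inY(1) inY(3) inY(2)] by blast
      have "(1 - e) * d2 (f w0) q = 0" using q(3) sym_d[OF bY inY(2) inY(5)] by simp
      moreover have "(1 - e) * d2 (f p) (f w0) = 0" using contr_zero[OF C p(1) w0(1) p(3)] .
      ultimately have 2: "(1 - e) * d2 (f p) q = 0" using tri_zero[OF bY inY(1) inY(5) inY(2)] by blast
      have "d2 (f p) q = 0" using split_zero[OF 1 2] .
      then have "f p = q" using bm_zero[OF bY inY(1) inY(2)] by blast
      then have "p \<in> {x \<in> X1. f x \<in> Z1}" using p(1) q(1) by simp
      moreover have "(1 - d2 (f y) z) * d1 p y = 0" using p(2) unfolding e_def .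
      ultimately show ?thesis by blast
    qed
    define P where "P y z = (SOME p. p \<in> {x \<in> X1. f x \<in> Z1} \<and> (1 - d2 (f y) z) * d1 p y = 0)" for y z
    have P: "P y z \<in> {x \<in> X1. f x \<in> Z1} \<and> (1 - d2 (f y) z) * d1 (P y z) y = 0"
      if "y \<in> X1" "z \<in> Z1" for y z
      unfolding P_def using someI_ex[OF ex[OF that]] .
    define F where "F = (\<lambda>(y,z). P y z) ` (FX \<times> FZ)"
    have "finite F" unfolding F_def using FX(1) FZ(1) by simp
    moreover have "F \<subseteq> {x \<in> X1. f x \<in> Z1}" unfolding F_def
    proof
      fix p assume "p \<in> (\<lambda>(y, z). P y z) ` (FX \<times> FZ)"
      then obtain y z where "y \<in> FX" "z \<in> FZ" "p = P y z" by auto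
      then show "p \<in> {x \<in> X1. f x \<in> Z1}" using P[of y z] FX(2) FZ(2) by blast
    qed
    moreover have "\<forall>x\<in>{x \<in> X1. f x \<in> Z1}. \<exists>n xs a. disj_partition n a \<and> (\<forall>i<n. xs i \<in> F) \<and> convex_comb d1 x n xs a"
    proof
      fix w assume w: "w \<in> {x \<in> X1. f x \<in> Z1}"
      obtain n1 xs1 and a :: "nat \<Rightarrow> 'b" where A: "disj_partition n1 a" "\<forall>i<n1. xs1 i \<in> FX" "convex_comb d1 w n1 xs1 a"
        using FX(3) w by blast
      obtain n2 xs2 and b :: "nat \<Rightarrow> 'b" where Bb: "disj_partition n2 b" "\<forall>i<n2. xs2 i \<in> FZ" "convex_comb d2 (f w) n2 xs2 b"
        using FZ(3) w by blast
      note PP = prod_partition[OF A(1) Bb(1)]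
      have "\<forall>ij\<in>{..<n1} \<times> {..<n2}. (\<lambda>(i,j). P (xs1 i) (xs2 j)) ij \<in> F \<and> (\<lambda>(i,j). a i * b j) ij * d1 w ((\<lambda>(i,j). P (xs1 i) (xs2 j)) ij) = 0"
      proof
        fix ij assume ij: "ij \<in> {..<n1} \<times> {..<n2}"
        obtain i j where ijd: "ij = (i,j)" "i < n1" "j < n2" using ij by auto
        define y where "y = xs1 i"
        define z where "z = xs2 j"
        define c where "c = a i * b j"
        have yz: "y \<in> FX" "z \<in> FZ" using A(2) Bb(2) ijd unfolding y_def z_def by auto
        have yzYZ: "y \<in> X1" "z \<in> Z1" using yz FX(2) FZ(2) by auto
        have wX: "w \<in> X1" using w by blast
        have inY: "f y \<in> Y1" "z \<in> Y1" "f w \<in> Y1" using yzYZ wX fX ZY by auto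
        have PX: "P y z \<in> X1" using P[OF yzYZ] by blast
        have "a i * d1 w y = 0" using A(3) ijd unfolding convex_comb_def y_def by blast
        moreover have "c * d1 w y = b j * (a i * d1 w y)" unfolding c_def by (simp add: ac_simps)
        ultimately have wy: "c * d1 w y = 0" by simp
        have "b j * d2 (f w) z = 0" using Bb(3) ijd unfolding convex_comb_def z_def by blast
        moreover have "c * d2 (f w) z = a i * (b j * d2 (f w) z)" unfolding c_def by (simp add: ac_simps)
        ultimately have wz: "c * d2 (f w) z = 0" by simp
        have "c * d2 (f w) (f y) = 0" using contr_zero[OF C wX yzYZ(1) wy] .
        then have "c * d2 (f y) (f w) = 0" using sym_d[OF bY inY(1) inY(3)] by simp
        then have "c * d2 (f y) z = 0" using tri_zero[OF bY inY(1) inY(3) inY(2) _ wz] by blast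
        then have ce: "c * (1 - d2 (f y) z) = c" by (simp add: algebra_simps)
        have "(1 - d2 (f y) z) * d1 (P y z) y = 0" using P[OF yzYZ] by blast
        moreover have "c * d1 (P y z) y = c * ((1 - d2 (f y) z) * d1 (P y z) y)" using ce by (metis mult.assoc)
        ultimately have "c * d1 (P y z) y = 0" by simp
        then have "c * d1 y (P y z) = 0" using sym_d[OF bX PX yzYZ(1)] by simp
        then have "c * d1 w (P y z) = 0" using tri_zero[OF bX wX yzYZ(1) PX wy] by blast
        moreover have "P y z \<in> F" unfolding F_def by (rule image_eqI[where x="(y,z)"]) (auto simp: yz)
        ultimately show "(\<lambda>(i,j). P (xs1 i) (xs2 j)) ij \<in> F \<and> (\<lambda>(i,j). a i * b j) ij * d1 w ((\<lambda>(i,j). P (xs1 i) (xs2 j)) ij) = 0"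
          using ijd unfolding y_def z_def c_def by simp
      qed
      from comb_from_set[where g="\<lambda>(i,j). P (xs1 i) (xs2 j)" and F=F and d=d1 and x=w, OF PP(1) PP(2) PP(3) PP(4) this]
      show "\<exists>n xs a. disj_partition n a \<and> (\<forall>i<n. xs i \<in> F) \<and> convex_comb d1 w n xs a" .
    qed
    ultimately show ?thesis by blast
  qed
qed

theorem mainTheorem8:
  fixes X Y Z :: "'a set" and d :: "'a \<Rightarrow> 'a \<Rightarrow> 'b::comm_ring_1"
    and X1 :: "'c set" and d1 :: "'c \<Rightarrow> 'c \<Rightarrow> 'b"
    and Y1 Z1 :: "'e set" and d2 :: "'e \<Rightarrow> 'e \<Rightarrow> 'b"
    and f :: "'c \<Rightarrow> 'e"
  assumes B: "boolean_ring TYPE('b)"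
  shows "((bmetric X d \<and> Y \<subseteq> X \<and> Z \<subseteq> X \<and> cfg_space Y d \<and> cfg_space Z d)
           \<longrightarrow> cfg_space (Y \<inter> Z) d)
       \<and> ((cfg_space X1 d1 \<and> cfg_space Y1 d2 \<and> f ` X1 \<subseteq> Y1 \<and> contractive X1 d1 d2 f \<and>
           Z1 \<subseteq> Y1 \<and> cfg_space Z1 d2)
           \<longrightarrow> cfg_space {x \<in> X1. f x \<in> Z1} d1)"
proof (intro conjI impI)
  assume h: "bmetric X d \<and> Y \<subseteq> X \<and> Z \<subseteq> X \<and> cfg_space Y d \<and> cfg_space Z d"
  then have h1: "bmetric X d" and h2: "Y \<subseteq> X" and h3: "Z \<subseteq> X" and h4: "cfg_space Y d"
    and h5: "cfg_space Z d" by simp_all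
  show "cfg_space (Y \<inter> Z) d" by (rule partA[OF B h1 h2 h3 h4 h5])
next
  assume h: "cfg_space X1 d1 \<and> cfg_space Y1 d2 \<and> f ` X1 \<subseteq> Y1 \<and> contractive X1 d1 d2 f \<and>
           Z1 \<subseteq> Y1 \<and> cfg_space Z1 d2"
  then have h1: "cfg_space X1 d1" and h2: "cfg_space Y1 d2" and h3: "f ` X1 \<subseteq> Y1"
    and h4: "contractive X1 d1 d2 f" and h5: "Z1 \<subseteq> Y1" and h6: "cfg_space Z1 d2" by simp_all
  show "cfg_space {x \<in> X1. f x \<in> Z1} d1" by (rule partB[OF B h1 h2 h3 h4 h5 h6])
qed

end
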